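(* Let $(X,\|\cdot\|)$ be a convex Banach space and let $\{v_n\}_{n\in\mathbb{N}}\subset X$ be a sequence such that $\|v_{n+m}\|\le\|v_n+v_m\|$ for all $n,m\in\mathbb{N}$ and $\lim_{n\to\infty}\frac{\|v_n\|}{n}>0$. Then the limit $\lim_{n\to\infty}\frac{v_n}{n}$ exists in $X$ if and only if $\left\{\frac{v_n}{\|v_n\|}\right\}_{n\in\mathbb{N}}$ is a uniformly convex subset of $X$.
   Context: $\mathbb{N}=\{1,2,3,\dots\}$. A Banach space $X$ is convex if for all $u,v\in X$ with $u\ne v$ and $\|u\|=\|v\|=1$ we have $\|u+v\|<2$. A subset $S\subset X$ is called uniformly convex if for every $\varepsilon>0$ there exists $\delta\in(0,1)$ such that for all $u,v\in S$ with $\|u\|=\|v\|=1$ and $\|u-v\|\ge\varepsilon$ we have $\|u+v\|\le 2-\delta$. (Under the hypotheses, the limit $\lim_{n\to\infty}\|v_n\|/n$ exists and equals $\inf_n \|v_n\|/n$ by the classical Fekete lemma, so all $v_n$ are non-zero.) *)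

theory Defs
  imports "HOL-Analysis.Analysis"
begin

text \<open>A (real) normed space is convex (strictly convex) if distinct unit vectors
  have a sum of norm strictly less than 2.\<close>
definition convex_space :: "'a::real_normed_vector itself \<Rightarrow> bool" where
  "convex_space _ \<longleftrightarrow>
     (\<forall>u v :: 'a. u \<noteq> v \<and> norm u = 1 \<and> norm v = 1 \<longrightarrow> norm (u + v) < 2)"

definition uniformly_convex_set :: "'a::real_normed_vector set \<Rightarrow> bool" where
  "uniformly_convex_set S \<longleftrightarrow>
     (\<forall>\<epsilon>>0. \<exists>\<delta>. 0 < \<delta> \<and> \<delta> < 1 \<and>
        (\<forall>u\<in>S. \<forall>v\<in>S. norm u = 1 \<and> norm v = 1 \<and> norm (u - v) \<ge> \<epsilon>
            \<longrightarrow> norm (u + v) \<le> 2 - \<delta>))"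

end

theory Submission
  imports Defs
begin


lemma compact_seq_limit:
  fixes f :: "nat \<Rightarrow> 'a::topological_space"
  assumes "f \<longlonglongrightarrow> l"
  shows "compact (insert l (range f))"
proof (rule compactI)
  fix C assume C: "\<forall>t\<in>C. open t" "insert l (range f) \<subseteq> \<Union>C"
  then obtain U where U: "U \<in> C" "l \<in> U" by auto
  with C have "open U" by auto
  with assms U have "eventually (\<lambda>n. f n \<in> U) sequentially"
    using topological_tendstoD by blast
  then obtain N where N: "\<And>n. n \<ge> N \<Longrightarrow> f n \<in> U" by (auto simp: eventually_sequentially)
  have "\<forall>n. \<exists>T. T \<in> C \<and> f n \<in> T" using C(2) by blast
  then obtain T where T: "\<And>n. T n \<in> C \<and> f n \<in> T n" by metis
  show "\<exists>C'\<subseteq>C. finite C' \<and> insert l (range f) \<subseteq> \<Union>C'"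
  proof (intro exI[of _ "insert U (T ` {..<N})"] conjI)
    show "insert U (T ` {..<N}) \<subseteq> C" using U T by auto
    show "finite (insert U (T ` {..<N}))" by auto
    show "insert l (range f) \<subseteq> \<Union>(insert U (T ` {..<N}))"
    proof
      fix x assume "x \<in> insert l (range f)"
      then show "x \<in> \<Union>(insert U (T ` {..<N}))"
      proof
        assume "x = l" then show ?thesis using U by auto
      next
        assume "x \<in> range f"
        then obtain n where n: "x = f n" by auto
        show ?thesis
        proof (cases "n < N")
          case True then show ?thesis using T n by auto
        next
          case False then show ?thesis using N n by auto
        qed
      qed
    qed
  qed
qed

lemma vec_ineq:
  fixes x y :: "'a::real_normed_vector"
  assumes "norm x > 0" "norm y > 0"
    and "norm (x /\<^sub>R norm x + y /\<^sub>R norm y) \<le> 2 - d" "0 \<le> d" "d \<le> 2"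
  shows "norm (x + y) \<le> norm x + norm y - min (norm x) (norm y) * d"
proof -
  have gen: "norm (p + q) \<le> norm p + norm q - norm p * d"
    if "norm p > 0" "norm p \<le> norm q" "norm (p /\<^sub>R norm p + q /\<^sub>R norm q) \<le> 2 - d"
    for p q :: 'a
  proof -
    have "p + q = norm p *\<^sub>R (p /\<^sub>R norm p + q /\<^sub>R norm q) + (norm q - norm p) *\<^sub>R (q /\<^sub>R norm q)"
    proof -
      have "norm q > 0" using that by auto
      then show ?thesis using that by (simp add: algebra_simps)
    qed
    then have "norm (p + q) \<le> norm p * norm (p /\<^sub>R norm p + q /\<^sub>R norm q) + (norm q - norm p) * norm (q /\<^sub>R norm q)"
      using that by (metis abs_of_nonneg diff_ge_0_iff_ge norm_ge_zero norm_scaleR norm_triangle_ineq)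
    also have "\<dots> \<le> norm p * (2 - d) + (norm q - norm p) * 1"
    proof -
      have "norm q > 0" using that by auto
      then have "norm (q /\<^sub>R norm q) = 1" by simp
      then show ?thesis using that by (intro add_mono mult_left_mono) auto
    qed
    finally show ?thesis by (simp add: algebra_simps)
  qed
  show ?thesis
  proof (cases "norm x \<le> norm y")
    case True then show ?thesis using gen[of x y] assms by auto
  next
    case False then show ?thesis using gen[of y x] assms by (auto simp: add.commute)
  qed
qed



lemma fekete_lb:
  fixes v :: "nat \<Rightarrow> 'a::real_normed_vector"
  assumes sub: "\<And>n m. n \<ge> 1 \<Longrightarrow> m \<ge> 1 \<Longrightarrow> norm (v (n + m)) \<le> norm (v n + v m)"
    and lim: "(\<lambda>n. norm (v n) / real n) \<longlonglongrightarrow> L"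
    and j: "j \<ge> 1"
  shows "real j * L \<le> norm (v j)"
proof -
  have mult: "norm (v (j * Suc k)) \<le> real (Suc k) * norm (v j)" for k
  proof (induction k)
    case 0 then show ?case by simp
  next
    case (Suc k)
    have "v (j * Suc (Suc k)) = v (j * Suc k + j)" by (simp add: algebra_simps)
    then have "norm (v (j * Suc (Suc k))) \<le> norm (v (j * Suc k) + v j)"
      using sub[of "j * Suc k" j] j by simp
    also have "\<dots> \<le> norm (v (j * Suc k)) + norm (v j)" by (rule norm_triangle_ineq)
    also have "\<dots> \<le> real (Suc k) * norm (v j) + norm (v j)" using Suc by simp
    finally show ?case by (simp add: algebra_simps)
  qed
  have sm: "strict_mono (\<lambda>k. j * Suc k)" using j by (auto simp: strict_mono_def)
  have "((\<lambda>n. norm (v n) / real n) \<circ> (\<lambda>k. j * Suc k)) \<longlonglongrightarrow> L"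
    by (rule LIMSEQ_subseq_LIMSEQ[OF lim sm])
  then have t: "(\<lambda>k. norm (v (j * Suc k)) / real (j * Suc k)) \<longlonglongrightarrow> L" by (simp add: o_def)
  have "L \<le> norm (v j) / real j"
  proof (rule LIMSEQ_le_const2[OF t], intro exI allI impI)
    fix k :: nat
    have pos: "real (j * Suc k) > 0" using j by (simp del: of_nat_mult mult_Suc_right)
    have "norm (v (j * Suc k)) \<le> real (Suc k) * norm (v j)" by (rule mult)
    then have "real j * norm (v (j * Suc k)) \<le> real j * (real (Suc k) * norm (v j))"
      by (rule mult_left_mono) simp
    then show "norm (v (j * Suc k)) / real (j * Suc k) \<le> norm (v j) / real j"
      using pos j by (simp add: divide_simps algebra_simps)
  qed
  then show ?thesis using j by (simp add: divide_simps algebra_simps)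
qed



lemma uc_imp_conv:
  fixes v :: "nat \<Rightarrow> 'a::banach"
  assumes sub: "\<And>n m. n \<ge> 1 \<Longrightarrow> m \<ge> 1 \<Longrightarrow> norm (v (n + m)) \<le> norm (v n + v m)"
    and lim: "(\<lambda>n. norm (v n) / real n) \<longlonglongrightarrow> L" and Lpos: "L > 0"
    and uc: "uniformly_convex_set {v n /\<^sub>R norm (v n) | n. n \<ge> 1}"
  shows "\<exists>w. (\<lambda>n. v n /\<^sub>R real n) \<longlonglongrightarrow> w"
proof -
  define u where "u n = v n /\<^sub>R norm (v n)" for n
  have lb: "\<And>j. j \<ge> 1 \<Longrightarrow> real j * L \<le> norm (v j)" using fekete_lb[OF sub lim] by blast
  have apos: "\<And>j. j \<ge> 1 \<Longrightarrow> norm (v j) > 0"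
  proof -
    fix j :: nat assume "j \<ge> 1"
    then have "real j * L > 0" using Lpos by simp
    then show "norm (v j) > 0" using lb[OF \<open>j \<ge> 1\<close>] by linarith
  qed
  have un: "\<And>j. j \<ge> 1 \<Longrightarrow> norm (u j) = 1" using apos by (simp add: u_def)
  have uS: "\<And>j. j \<ge> 1 \<Longrightarrow> u j \<in> {v n /\<^sub>R norm (v n) | n. n \<ge> 1}" by (auto simp: u_def)
  have Kin: "norm (v (s + n)) \<le> norm (v s) + norm (v n) - real n * L * d"
    if "n \<ge> 1" "s \<ge> n" "e \<le> norm (u s - u n)" "0 \<le> d" "d < 1"
      "\<And>x y. x \<in> {v n /\<^sub>R norm (v n) | n. n \<ge> 1} \<Longrightarrow> y \<in> {v n /\<^sub>R norm (v n) | n. n \<ge> 1} \<Longrightarrow>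
         norm x = 1 \<Longrightarrow> norm y = 1 \<Longrightarrow> e \<le> norm (x - y) \<Longrightarrow> norm (x + y) \<le> 2 - d"
    for s n e d
  proof -
    have s1: "s \<ge> 1" using that(1,2) by simp
    have "norm (u s + u n) \<le> 2 - d" using that(6)[OF uS[OF s1] uS[OF that(1)] un[OF s1] un[OF that(1)] that(3)] .
    then have "norm (v s + v n) \<le> norm (v s) + norm (v n) - min (norm (v s)) (norm (v n)) * d"
      using vec_ineq[of "v s" "v n" d] apos[OF s1] apos[OF that(1)] that(4,5) by (simp add: u_def)
    moreover have "real n * L \<le> min (norm (v s)) (norm (v n))"
    proof -
      have "real n * L \<le> real s * L" using that(2) Lpos by (simp add: mult_right_mono)
      then show ?thesis using lb[OF s1] lb[OF that(1)] by simp
    qed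
    then have "real n * L * d \<le> min (norm (v s)) (norm (v n)) * d" using that(4) by (simp add: mult_right_mono)
    ultimately show ?thesis using sub[OF s1 that(1)] by linarith
  qed
  have cau: "Cauchy u"
  proof (rule CauchyI)
    fix r :: real assume "r > 0"
    define e where "e = r / 4"
    have "e > 0" using \<open>r > 0\<close> by (simp add: e_def)
    then obtain d where d: "0 < d" "d < 1"
      "\<And>x y. x \<in> {v n /\<^sub>R norm (v n) | n. n \<ge> 1} \<Longrightarrow> y \<in> {v n /\<^sub>R norm (v n) | n. n \<ge> 1} \<Longrightarrow>
         norm x = 1 \<Longrightarrow> norm y = 1 \<Longrightarrow> e \<le> norm (x - y) \<Longrightarrow> norm (x + y) \<le> 2 - d"
      using uc unfolding uniformly_convex_set_def by blast
    define th where "th = L * d / 5"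
    have th: "th > 0" using Lpos d(1) by (simp add: th_def)
    obtain N0 where N0: "\<And>j. j \<ge> N0 \<Longrightarrow> dist (norm (v j) / real j) L < th"
      using lim th unfolding LIMSEQ_def by blast
    define N where "N = max N0 1"
    have N1: "N \<ge> 1" by (simp add: N_def)
    have ub: "norm (v j) \<le> real j * (L + th)" if "j \<ge> N" for j
    proof -
      have "j \<ge> N0" "j \<ge> 1" using that by (auto simp: N_def)
      then have "norm (v j) / real j < L + th" using N0[of j] by (simp add: dist_real_def)
      then show ?thesis using \<open>j \<ge> 1\<close> by (simp add: divide_simps algebra_simps)
    qed
    have close: "norm (u m - u N) < 2 * e" if m: "m \<ge> 2 * N" for m
    proof -
      define k where "k = m div (2 * N)"
      define b where "b = m - k * N"
      have dm: "k * (2 * N) + m mod (2 * N) = m" unfolding k_def by (rule div_mult_mod_eq)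
      have mlt: "m mod (2 * N) < 2 * N" using N1 by simp
      have k1: "k \<ge> 1"
      proof (rule ccontr)
        assume "\<not> k \<ge> 1"
        then have "k = 0" by simp
        then show False using dm mlt m by simp
      qed
      have bm: "b + k * N = m" using dm unfolding b_def by simp
      have bk: "b \<ge> k * N" using dm unfolding b_def by simp
      have "N \<le> k * N" using k1 by simp
      then have bN: "b \<ge> N" using bk by linarith
      have b3: "b \<le> 3 * (k * N)"
      proof -
        have "N \<le> k * N" using k1 by simp
        then show ?thesis using dm mlt unfolding b_def by linarith
      qed
      have "\<exists>j<k. norm (u (b + j * N) - u N) < e"
      proof (rule ccontr)
        assume "\<not> ?thesis"
        then have bad: "\<And>j. j < k \<Longrightarrow> e \<le> norm (u (b + j * N) - u N)" by (meson not_le)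
        have chain: "k' \<le> k \<Longrightarrow> norm (v (b + k' * N)) + real k' * real N * L * d \<le> norm (v b) + real k' * norm (v N)" for k'
        proof (induction k')
          case 0 then show ?case by simp
        next
          case (Suc k')
          have st: "norm (v (b + k' * N + N)) \<le> norm (v (b + k' * N)) + norm (v N) - real N * L * d"
          proof -
            have "N \<le> b + k' * N" using bN by simp
            moreover have "e \<le> norm (u (b + k' * N) - u N)" using bad[of k'] Suc.prems by simp
            moreover have "0 \<le> d" using d(1) by simp
            ultimately show ?thesis using Kin[of N "b + k' * N" e d, OF N1 _ _ _ d(2) d(3)] by blast
          qed
          have "b + Suc k' * N = b + k' * N + N" by simp
          then show ?case using st Suc by (simp add: algebra_simps)
        qed
        have c: "norm (v m) + real k * real N * L * d \<le> norm (v b) + real k * norm (v N)"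
          using chain[of k] bm by simp
        have "1 \<le> m" using m N1 by linarith
        then have "real m * L \<le> norm (v m)" by (rule lb)
        have "norm (v b) \<le> real b * (L + th)" using bN by (rule ub)
        have "norm (v N) \<le> real N * (L + th)" by (rule ub) simp
        then have "real k * norm (v N) \<le> real k * (real N * (L + th))" by (simp add: mult_left_mono)
        define X where "X = real k * real N"
        have "real m = real (b + k * N)" using bm by simp
        then have rm: "real m = real b + X" unfolding X_def by simp
        have "real b \<le> real (3 * (k * N))" using b3 by (simp only: of_nat_le_iff)
        then have rb: "real b \<le> 3 * X" unfolding X_def by simp
        have Xp: "X > 0" using k1 N1 unfolding X_def by simp
        have P: "X * L * d > 0" using Xp Lpos d(1) by simp
        have "X * L * d \<le> (real b + X) * th"
          using c \<open>real m * L \<le> norm (v m)\<close> \<open>norm (v b) \<le> real b * (L + th)\<close>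
            \<open>real k * norm (v N) \<le> real k * (real N * (L + th))\<close> rm
        proof -
          have e1: "real m * L = real b * L + X * L" using rm by (simp add: algebra_simps)
          have e2: "real b * (L + th) = real b * L + real b * th" by (simp add: algebra_simps)
          have e3: "real k * (real N * (L + th)) = X * L + X * th" unfolding X_def by (simp add: algebra_simps)
          have e4: "real k * real N * L * d = X * L * d" unfolding X_def by simp
          have e5: "(real b + X) * th = real b * th + X * th" by (simp add: algebra_simps)
          show ?thesis
            using c \<open>real m * L \<le> norm (v m)\<close> \<open>norm (v b) \<le> real b * (L + th)\<close>
              \<open>real k * norm (v N) \<le> real k * (real N * (L + th))\<close> e1 e2 e3 e4 e5 by linarith
        qed
        also have "\<dots> \<le> (4 * X) * th"
        proof -
          have "real b + X \<le> 4 * X" using rb by simp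
          then show ?thesis using th by (intro mult_right_mono) auto
        qed
        also have "\<dots> = 4 / 5 * (X * L * d)" by (simp add: th_def)
        finally show False using P by linarith
      qed
      then obtain j where j: "j < k" "norm (u (b + j * N) - u N) < e" by blast
      define s where "s = b + j * N"
      have "b \<le> s" unfolding s_def by simp
      then have sN: "s \<ge> N" using bN by linarith
      have "j * N \<le> k * N" using j(1) by (intro mult_le_mono1) simp
      then have sm: "s \<le> m" using bm unfolding s_def by linarith
      have "m \<le> 2 * b" using bm bk by linarith
      then have ms: "m \<le> 2 * s" unfolding s_def by simp
      have "norm (u m - u s) < e"
      proof (rule ccontr)
        assume "\<not> ?thesis"
        then have "e \<le> norm (u m - u s)" by simp
        then have K: "norm (v (m + s)) \<le> norm (v m) + norm (v s) - real s * L * d"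
        proof -
          have "1 \<le> s" using sN N1 by linarith
          moreover have "0 \<le> d" using d(1) by simp
          ultimately show ?thesis using Kin[of s m e d, OF _ sm _ _ d(2) d(3)] \<open>e \<le> norm (u m - u s)\<close> by blast
        qed
        have "1 \<le> m + s" using sN N1 by linarith
        then have "real (m + s) * L \<le> norm (v (m + s))" by (rule lb)
        have "N \<le> m" using m by linarith
        then have "norm (v m) \<le> real m * (L + th)" by (rule ub)
        have "norm (v s) \<le> real s * (L + th)" using sN by (rule ub)
        have Sp: "real s * L * d > 0" using sN N1 Lpos d(1) by simp
        have "real s * L * d \<le> (real m + real s) * th"
        proof -
          have e1: "real (m + s) * L = real m * L + real s * L" by (simp add: algebra_simps)
          have e2: "real m * (L + th) = real m * L + real m * th" by (simp add: algebra_simps)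
          have e3: "real s * (L + th) = real s * L + real s * th" by (simp add: algebra_simps)
          have e4: "(real m + real s) * th = real m * th + real s * th" by (simp add: algebra_simps)
          show ?thesis
          using K \<open>real (m + s) * L \<le> norm (v (m + s))\<close> \<open>norm (v m) \<le> real m * (L + th)\<close>
            \<open>norm (v s) \<le> real s * (L + th)\<close> e1 e2 e3 e4 by linarith
        qed
        also have "\<dots> \<le> (3 * real s) * th"
        proof -
          have "real m \<le> real (2 * s)" using ms by (simp only: of_nat_le_iff)
          then have "real m + real s \<le> 3 * real s" by simp
          then show ?thesis using th by (intro mult_right_mono) auto
        qed
        also have "\<dots> = 3 / 5 * (real s * L * d)" by (simp add: th_def)
        finally show False using Sp by linarith
      qed
      moreover have "norm (u m - u N) \<le> norm (u m - u s) + norm (u s - u N)"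
        by (rule norm_diff_triangle_le[OF order_refl order_refl])
      ultimately show ?thesis using j(2) unfolding s_def by linarith
    qed
    show "\<exists>M. \<forall>m\<ge>M. \<forall>n\<ge>M. norm (u m - u n) < r"
    proof (intro exI[of _ "2 * N"] allI impI)
      fix m n assume "m \<ge> 2 * N" "n \<ge> 2 * N"
      then have "norm (u m - u N) < 2 * e" "norm (u n - u N) < 2 * e" using close by auto
      moreover have "norm (u m - u n) \<le> norm (u m - u N) + norm (u N - u n)"
        by (rule norm_diff_triangle_le[OF order_refl order_refl])
      moreover have "norm (u N - u n) = norm (u n - u N)" by (rule norm_minus_commute)
      ultimately show "norm (u m - u n) < r" unfolding e_def by linarith
    qed
  qed
  then have "convergent u" by (simp add: Cauchy_convergent_iff)
  then obtain ee where ee: "u \<longlonglongrightarrow> ee" unfolding convergent_def by blast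
  have "(\<lambda>n. (norm (v n) / real n) *\<^sub>R u n) \<longlonglongrightarrow> L *\<^sub>R ee"
    by (intro tendsto_scaleR lim ee)
  moreover have "eventually (\<lambda>n. (norm (v n) / real n) *\<^sub>R u n = v n /\<^sub>R real n) sequentially"
    unfolding eventually_sequentially
  proof (intro exI[of _ 1] allI impI)
    fix n :: nat assume "n \<ge> 1"
    then show "(norm (v n) / real n) *\<^sub>R u n = v n /\<^sub>R real n"
      using apos[OF \<open>n \<ge> 1\<close>] unfolding u_def by (simp add: divide_inverse)
  qed
  ultimately have "(\<lambda>n. v n /\<^sub>R real n) \<longlonglongrightarrow> L *\<^sub>R ee"
    by (rule Lim_transform_eventually)
  then show ?thesis by blast
qed



lemma conv_imp_uc:
  fixes v :: "nat \<Rightarrow> 'a::banach"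
  assumes cs: "convex_space TYPE('a)"
    and sub: "\<And>n m. n \<ge> 1 \<Longrightarrow> m \<ge> 1 \<Longrightarrow> norm (v (n + m)) \<le> norm (v n + v m)"
    and lim: "(\<lambda>n. norm (v n) / real n) \<longlonglongrightarrow> L" and Lpos: "L > 0"
    and wlim: "(\<lambda>n. v n /\<^sub>R real n) \<longlonglongrightarrow> w"
  shows "uniformly_convex_set {v n /\<^sub>R norm (v n) | n. n \<ge> 1}"
proof -
  have lb: "\<And>j. j \<ge> 1 \<Longrightarrow> real j * L \<le> norm (v j)" using fekete_lb[OF sub lim] by blast
  have apos: "\<And>j. j \<ge> 1 \<Longrightarrow> norm (v j) > 0"
  proof -
    fix j :: nat assume "j \<ge> 1"
    then have "real j * L > 0" using Lpos by simp
    then show "norm (v j) > 0" using lb[OF \<open>j \<ge> 1\<close>] by linarith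
  qed
  have "(\<lambda>n. norm (v n /\<^sub>R real n)) \<longlonglongrightarrow> norm w" using wlim by (rule tendsto_norm)
  moreover have "(\<lambda>n. norm (v n /\<^sub>R real n)) = (\<lambda>n. norm (v n) / real n)"
    by (simp add: divide_inverse mult.commute)
  ultimately have nw: "norm w = L" using lim LIMSEQ_unique by metis
  define u' where "u' k = v (Suc k) /\<^sub>R norm (v (Suc k))" for k
  define e where "e = inverse L *\<^sub>R w"
  have ne: "norm e = 1" using nw Lpos by (simp add: e_def)
  have "(\<lambda>k. norm (v (Suc k)) / real (Suc k)) \<longlonglongrightarrow> L"
    using LIMSEQ_Suc[OF lim] by simp
  then have "(\<lambda>k. inverse (norm (v (Suc k)) / real (Suc k))) \<longlonglongrightarrow> inverse L"
    using Lpos by (intro tendsto_inverse) auto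
  moreover have "(\<lambda>k. v (Suc k) /\<^sub>R real (Suc k)) \<longlonglongrightarrow> w"
    using LIMSEQ_Suc[OF wlim] by simp
  ultimately have "(\<lambda>k. inverse (norm (v (Suc k)) / real (Suc k)) *\<^sub>R (v (Suc k) /\<^sub>R real (Suc k))) \<longlonglongrightarrow> e"
    unfolding e_def by (rule tendsto_scaleR)
  moreover have "(\<lambda>k. inverse (norm (v (Suc k)) / real (Suc k)) *\<^sub>R (v (Suc k) /\<^sub>R real (Suc k))) = u'"
  proof
    fix k
    have "norm (v (Suc k)) > 0" using apos by simp
    then show "inverse (norm (v (Suc k)) / real (Suc k)) *\<^sub>R (v (Suc k) /\<^sub>R real (Suc k)) = u' k"
      unfolding u'_def by (simp add: divide_inverse)
  qed
  ultimately have ul: "u' \<longlonglongrightarrow> e" by simp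
  define K where "K = insert e (range u')"
  have cK: "compact K" unfolding K_def using ul by (rule compact_seq_limit)
  have nK: "\<And>x. x \<in> K \<Longrightarrow> norm x = 1"
  proof -
    fix x assume "x \<in> K"
    then show "norm x = 1"
    proof (cases "x = e")
      case True then show ?thesis using ne by simp
    next
      case False
      then obtain k where "x = u' k" using \<open>x \<in> K\<close> unfolding K_def by auto
      moreover have "norm (v (Suc k)) > 0" using apos by simp
      ultimately show ?thesis unfolding u'_def by simp
    qed
  qed
  have SK: "{v n /\<^sub>R norm (v n) | n. n \<ge> 1} \<subseteq> K"
  proof
    fix x assume "x \<in> {v n /\<^sub>R norm (v n) | n. n \<ge> 1}"
    then obtain n where n: "n \<ge> 1" "x = v n /\<^sub>R norm (v n)" by blast
    then have "x = u' (n - 1)" unfolding u'_def by simp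
    then show "x \<in> K" unfolding K_def by simp
  qed
  show ?thesis unfolding uniformly_convex_set_def
  proof (intro allI impI)
    fix ep :: real assume ep: "ep > 0"
    define P where "P = (K \<times> K) \<inter> {z. ep \<le> norm (fst z - snd z)}"
    have cl: "closed {z :: 'a \<times> 'a. ep \<le> norm (fst z - snd z)}"
      by (intro closed_Collect_le continuous_intros)
    have cP: "compact P" unfolding P_def using compact_Times[OF cK cK] cl by (rule compact_Int_closed)
    show "\<exists>\<delta>>0. \<delta> < 1 \<and> (\<forall>x\<in>{v n /\<^sub>R norm (v n) | n. n \<ge> 1}. \<forall>y\<in>{v n /\<^sub>R norm (v n) | n. n \<ge> 1}.
            norm x = 1 \<and> norm y = 1 \<and> ep \<le> norm (x - y) \<longrightarrow> norm (x + y) \<le> 2 - \<delta>)"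
    proof (cases "P = {}")
      case True
      show ?thesis
      proof (intro exI[of _ "1/2"] conjI ballI impI)
        fix x y assume "x \<in> {v n /\<^sub>R norm (v n) | n. n \<ge> 1}" "y \<in> {v n /\<^sub>R norm (v n) | n. n \<ge> 1}"
          and h: "norm x = 1 \<and> norm y = 1 \<and> ep \<le> norm (x - y)"
        then have "(x, y) \<in> P" using SK unfolding P_def by auto
        then show "norm (x + y) \<le> 2 - 1/2" using True by simp
      qed auto
    next
      case False
      have "continuous_on P (\<lambda>z. norm (fst z + snd z))" by (intro continuous_intros)
      then obtain z0 where z0: "z0 \<in> P" "\<And>z. z \<in> P \<Longrightarrow> norm (fst z + snd z) \<le> norm (fst z0 + snd z0)"
        using continuous_attains_sup[OF cP False] by blast
      define M where "M = norm (fst z0 + snd z0)"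
      have "fst z0 \<in> K" "snd z0 \<in> K" "ep \<le> norm (fst z0 - snd z0)" using z0(1) unfolding P_def by auto
      then have "norm (fst z0) = 1" "norm (snd z0) = 1" "fst z0 \<noteq> snd z0" using nK ep by auto
      then have M2: "M < 2" unfolding M_def using cs unfolding convex_space_def by blast
      show ?thesis
      proof (intro exI[of _ "min (1/2) (2 - M)"] conjI ballI impI)
        show "0 < min (1/2) (2 - M)" using M2 by simp
        show "min (1/2) (2 - M) < 1" by simp
        fix x y assume "x \<in> {v n /\<^sub>R norm (v n) | n. n \<ge> 1}" "y \<in> {v n /\<^sub>R norm (v n) | n. n \<ge> 1}"
          and h: "norm x = 1 \<and> norm y = 1 \<and> ep \<le> norm (x - y)"
        then have "(x, y) \<in> P" using SK unfolding P_def by auto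
        then have "norm (x + y) \<le> M" using z0(2)[of "(x, y)"] unfolding M_def by simp
        then show "norm (x + y) \<le> 2 - min (1/2) (2 - M)" by linarith
      qed
    qed
  qed
qed


theorem mainTheorem9:
  fixes v :: "nat \<Rightarrow> 'a::banach"
  assumes "convex_space TYPE('a)"
    and "\<And>n m. n \<ge> 1 \<Longrightarrow> m \<ge> 1 \<Longrightarrow> norm (v (n + m)) \<le> norm (v n + v m)"
    and "\<exists>L>0. (\<lambda>n. norm (v n) / real n) \<longlonglongrightarrow> L"
  shows "(\<exists>w. (\<lambda>n. v n /\<^sub>R real n) \<longlonglongrightarrow> w) \<longleftrightarrow>
         uniformly_convex_set {v n /\<^sub>R norm (v n) | n. n \<ge> 1}"
proof -
  obtain L where L: "L > 0" "(\<lambda>n. norm (v n) / real n) \<longlonglongrightarrow> L" using assms(3) by blast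
  show ?thesis
  proof
    assume "\<exists>w. (\<lambda>n. v n /\<^sub>R real n) \<longlonglongrightarrow> w"
    then obtain w where "(\<lambda>n. v n /\<^sub>R real n) \<longlonglongrightarrow> w" by blast
    then show "uniformly_convex_set {v n /\<^sub>R norm (v n) | n. n \<ge> 1}"
      using conv_imp_uc[OF assms(1) assms(2) L(2) L(1)] by blast
  next
    assume "uniformly_convex_set {v n /\<^sub>R norm (v n) | n. n \<ge> 1}"
    then show "\<exists>w. (\<lambda>n. v n /\<^sub>R real n) \<longlonglongrightarrow> w"
      using uc_imp_conv[OF assms(2) L(2) L(1)] by blast
  qed
qed

end
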